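(* For every fixed integer $d\ge1$, neither Enum $d$-Cut nor Enum Max-$d$-Cut, parameterized by the vertex cover number $\mathsf{vc}(G)$ or by the neighborhood diversity $\mathsf{nd}(G)$ of the input graph, admits a fully-polynomial enumeration kernel of any size.
   Context: All graphs are finite, simple and undirected. A cut of $G$ is a partition $(A,B)$ of $V(G)$ into two nonempty sets; its edge cut $E_G(A,B)$ is the set of edges with one endpoint in $A$ and the other in $B$. A cut is a $d$-cut if every vertex of $A$ has at most $d$ neighbors in $B$ and every vertex of $B$ has at most $d$ neighbors in $A$; $d$-cuts are identified when their edge cuts coincide. A $d$-cut is maximal if no $d$-cut has edge cut strictly containing its edge cut. Enum $d$-Cut / Enum Max-$d$-Cut: enumerate without duplicates all / all maximal $d$-cuts of $G$. $\mathsf{vc}(G)$ is the vertex cover number; $\mathsf{nd}(G)$ is the minimum number of parts of a partition of $V(G)$ into sets each of which is a clique or independent set whose vertices share the same neighborhood outside the set. A parameterized enumeration problem is a triple $\Pi=(L,\mathsf{Sol},\kappa)$ with $\mathsf{Sol}(x)$ finite, nonempty iff $x\in L$. A fully-polynomial enumeration kernel consists of (i) a kernelization algorithm computing from $x$, in time polynomial in $|x|+\kappa(x)$, an instance $y$ with $|y|+\kappa(y)\le f(\kappa(x))$ for some computable $f$, and (ii) a solution-lifting algorithm that for each $s\in\mathsf{Sol}(y)$ computes, in time polynomial in $|x|+|y|+\kappa(x)+\kappa(y)$, a nonempty $S_s\subseteq\mathsf{Sol}(x)$ such that $\{S_s\}_{s\in\mathsf{Sol}(y)}$ partitions $\mathsf{Sol}(x)$.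 *)

theory Defs
  imports Main
begin

type_synonym graph = "nat set \<times> nat set set"

definition verts :: "graph \<Rightarrow> nat set" where "verts G = fst G"
definition edges :: "graph \<Rightarrow> nat set set" where "edges G = snd G"

definition wf_graph :: "graph \<Rightarrow> bool" where
  "wf_graph G \<longleftrightarrow> finite (verts G) \<and>
     (\<forall>e\<in>edges G. \<exists>u v. e = {u, v} \<and> u \<noteq> v \<and> u \<in> verts G \<and> v \<in> verts G)"

definition nbrs :: "graph \<Rightarrow> nat \<Rightarrow> nat set" where
  "nbrs G v = {u. {u, v} \<in> edges G}"

definition graph_size :: "graph \<Rightarrow> nat" where
  "graph_size G = card (verts G) + card (edges G)"

definition is_cut :: "graph \<Rightarrow> nat set \<Rightarrow> nat set \<Rightarrow> bool" where
  "is_cut G A B \<longleftrightarrow> A \<noteq> {} \<and> B \<noteq> {} \<and> A \<inter> B = {} \<and> A \<union> B = verts G"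

definition edge_cut :: "graph \<Rightarrow> nat set \<Rightarrow> nat set \<Rightarrow> nat set set" where
  "edge_cut G A B = {e \<in> edges G. \<exists>a\<in>A. \<exists>b\<in>B. e = {a, b}}"

definition is_dcut :: "nat \<Rightarrow> graph \<Rightarrow> nat set \<Rightarrow> nat set \<Rightarrow> bool" where
  "is_dcut d G A B \<longleftrightarrow> is_cut G A B \<and>
     (\<forall>a\<in>A. card (nbrs G a \<inter> B) \<le> d) \<and> (\<forall>b\<in>B. card (nbrs G b \<inter> A) \<le> d)"

text \<open>Solutions of Enum d-Cut: d-cuts identified by their edge cuts.\<close>
definition dcuts :: "nat \<Rightarrow> graph \<Rightarrow> nat set set set" where
  "dcuts d G = {edge_cut G A B | A B. is_dcut d G A B}"

definition max_dcuts :: "nat \<Rightarrow> graph \<Rightarrow> nat set set set" where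
  "max_dcuts d G = {F \<in> dcuts d G. \<not> (\<exists>F'\<in>dcuts d G. F \<subset> F')}"

definition vertex_cover :: "graph \<Rightarrow> nat set \<Rightarrow> bool" where
  "vertex_cover G C \<longleftrightarrow> C \<subseteq> verts G \<and> (\<forall>e\<in>edges G. e \<inter> C \<noteq> {})"

definition vc :: "graph \<Rightarrow> nat" where
  "vc G = Min {card C | C. vertex_cover G C}"

definition is_clique :: "graph \<Rightarrow> nat set \<Rightarrow> bool" where
  "is_clique G X \<longleftrightarrow> (\<forall>u\<in>X. \<forall>v\<in>X. u \<noteq> v \<longrightarrow> {u, v} \<in> edges G)"

definition is_indep :: "graph \<Rightarrow> nat set \<Rightarrow> bool" where
  "is_indep G X \<longleftrightarrow> (\<forall>u\<in>X. \<forall>v\<in>X. {u, v} \<notin> edges G)"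

definition nd_partition :: "graph \<Rightarrow> nat set set \<Rightarrow> bool" where
  "nd_partition G P \<longleftrightarrow>
     (\<forall>X\<in>P. X \<noteq> {}) \<and> (\<forall>X\<in>P. \<forall>Y\<in>P. X \<noteq> Y \<longrightarrow> X \<inter> Y = {}) \<and> \<Union>P = verts G \<and>
     (\<forall>X\<in>P. (is_clique G X \<or> is_indep G X) \<and>
             (\<forall>u\<in>X. \<forall>v\<in>X. nbrs G u - X = nbrs G v - X))"

definition nd :: "graph \<Rightarrow> nat" where
  "nd G = Min {card P | P. nd_partition G P}"

text \<open>Polynomial running time of the lifting step is abstracted to its necessary
  consequence that the number of output solutions is polynomially bounded.\<close>

definition fp_enum_kernel ::
  "(graph \<Rightarrow> nat set set set) \<Rightarrow> (graph \<Rightarrow> nat) \<Rightarrow> bool" where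
  "fp_enum_kernel Sol kappa \<longleftrightarrow>
     (\<exists>(K :: graph \<Rightarrow> graph) (L :: graph \<Rightarrow> nat set set \<Rightarrow> nat set set set)
        (f :: nat \<Rightarrow> nat) (c :: nat).
      \<forall>x. wf_graph x \<longrightarrow>
        wf_graph (K x) \<and>
        graph_size (K x) + kappa (K x) \<le> f (kappa x) \<and>
        (\<forall>s\<in>Sol (K x). L x s \<noteq> {} \<and> L x s \<subseteq> Sol x \<and>
           card (L x s) \<le> c * (graph_size x + graph_size (K x) + kappa x + kappa (K x) + 1) ^ c) \<and>
        (\<forall>s\<in>Sol (K x). \<forall>s'\<in>Sol (K x). s \<noteq> s' \<longrightarrow> L x s \<inter> L x s' = {}) \<and>
        (\<Union>s\<in>Sol (K x). L x s) = Sol x)"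

end

theory Submission
  imports Defs "HOL-Library.Nat_Bijection" "HOL-Library.FuncSet"
begin


lemma wf_edges_sub: "wf_graph G \<Longrightarrow> edges G \<subseteq> Pow (verts G)"
proof
  fix e assume w: "wf_graph G" and e: "e \<in> edges G"
  then obtain u v where "e = {u, v}" "u \<in> verts G" "v \<in> verts G" unfolding wf_graph_def by meson
  then show "e \<in> Pow (verts G)" by simp
qed

lemma wf_edges_finite: "wf_graph G \<Longrightarrow> finite (edges G)"
proof -
  assume w: "wf_graph G"
  then have "finite (verts G)" unfolding wf_graph_def by simp
  then show ?thesis using wf_edges_sub[OF w] finite_Pow_iff rev_finite_subset by metis
qed

lemma kernel_bound:
  assumes fp: "fp_enum_kernel Sol kappa"
    and sub: "\<And>x. wf_graph x \<Longrightarrow> Sol x \<subseteq> Pow (edges x)"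
  shows "\<exists>c. \<forall>K0. \<exists>H. \<forall>x. wf_graph x \<longrightarrow> kappa x \<le> K0 \<longrightarrow> card (Sol x) \<le> H * (graph_size x + 1) ^ c"
proof -
  obtain K L f c where kf: "\<forall>x. wf_graph x \<longrightarrow>
        wf_graph (K x) \<and>
        graph_size (K x) + kappa (K x) \<le> f (kappa x) \<and>
        (\<forall>s\<in>Sol (K x). L x s \<noteq> {} \<and> L x s \<subseteq> Sol x \<and>
           card (L x s) \<le> c * (graph_size x + graph_size (K x) + kappa x + kappa (K x) + 1) ^ c) \<and>
        (\<forall>s\<in>Sol (K x). \<forall>s'\<in>Sol (K x). s \<noteq> s' \<longrightarrow> L x s \<inter> L x s' = {}) \<and>
        (\<Union>s\<in>Sol (K x). L x s) = Sol x"
    using fp unfolding fp_enum_kernel_def by (elim exE) (rule that)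
  show ?thesis
  proof (rule exI[of _ c], rule allI)
    fix K0
    define Fm where "Fm = (\<Sum>j\<le>K0. f j)"
    define H where "H = 2 ^ Fm * (c * (K0 + Fm + 1) ^ c)"
    show "\<exists>H. \<forall>x. wf_graph x \<longrightarrow> kappa x \<le> K0 \<longrightarrow> card (Sol x) \<le> H * (graph_size x + 1) ^ c"
    proof (rule exI[of _ H])
    show "\<forall>x. wf_graph x \<longrightarrow> kappa x \<le> K0 \<longrightarrow> card (Sol x) \<le> H * (graph_size x + 1) ^ c"
    proof (intro allI impI)
      fix x assume wx: "wf_graph x" and kx: "kappa x \<le> K0"
      note kx0 = kf[rule_format, OF wx]
      have wK: "wf_graph (K x)" using kx0 by blast
      have fK: "graph_size (K x) + kappa (K x) \<le> f (kappa x)" using kx0 by blast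
      have Lb: "\<And>s. s \<in> Sol (K x) \<Longrightarrow>
           card (L x s) \<le> c * (graph_size x + graph_size (K x) + kappa x + kappa (K x) + 1) ^ c"
        using kx0 by blast
      have Un: "(\<Union>s\<in>Sol (K x). L x s) = Sol x" using kx0 by blast
      have "f (kappa x) \<le> Fm" unfolding Fm_def
        using kx by (intro member_le_sum) auto
      hence fK2: "graph_size (K x) + kappa (K x) \<le> Fm" using fK by linarith
      have "graph_size x + graph_size (K x) + kappa x + kappa (K x) + 1 \<le> (graph_size x + 1) * (K0 + Fm + 1)"
        using fK2 kx by (simp add: algebra_simps add_mono trans_le_add1)
      hence "(graph_size x + graph_size (K x) + kappa x + kappa (K x) + 1) ^ c \<le> ((graph_size x + 1) * (K0 + Fm + 1)) ^ c"
        by (rule power_mono) simp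
      hence "c * (graph_size x + graph_size (K x) + kappa x + kappa (K x) + 1) ^ c \<le> c * ((graph_size x + 1) * (K0 + Fm + 1)) ^ c"
        by (rule mult_le_mono2)
      also have "\<dots> = c * (K0 + Fm + 1) ^ c * (graph_size x + 1) ^ c"
        by (simp only: power_mult_distrib ac_simps)
      finally have Lb2: "\<And>s. s \<in> Sol (K x) \<Longrightarrow> card (L x s) \<le> c * (K0 + Fm + 1) ^ c * (graph_size x + 1) ^ c"
        using Lb le_trans by blast
      have finE: "finite (edges (K x))" using wf_edges_finite[OF wK] .
      have finS: "finite (Sol (K x))" using sub[OF wK] finE by (meson finite_Pow_iff rev_finite_subset)
      have "card (edges (K x)) \<le> Fm" using fK2 unfolding graph_size_def by linarith
      have "card (Sol (K x)) \<le> card (Pow (edges (K x)))"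
        using card_mono[OF _ sub[OF wK]] finE by simp
      also have "\<dots> = 2 ^ card (edges (K x))" using card_Pow finE by blast
      also have "\<dots> \<le> 2 ^ Fm" using \<open>card (edges (K x)) \<le> Fm\<close> by (rule power_increasing) simp
      finally have "card (Sol (K x)) \<le> 2 ^ Fm" .
      have "card (Sol x) \<le> (\<Sum>s\<in>Sol (K x). card (L x s))"
        unfolding Un[symmetric] by (rule card_UN_le[OF finS])
      also have "\<dots> \<le> card (Sol (K x)) * (c * (K0 + Fm + 1) ^ c * (graph_size x + 1) ^ c)"
        using sum_bounded_above[of "Sol (K x)" "\<lambda>s. card (L x s)", OF Lb2] by simp
      also have "\<dots> \<le> 2 ^ Fm * (c * (K0 + Fm + 1) ^ c * (graph_size x + 1) ^ c)"
        using \<open>card (Sol (K x)) \<le> 2 ^ Fm\<close> by (rule mult_right_mono) simp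
      finally show "card (Sol x) \<le> H * (graph_size x + 1) ^ c" unfolding H_def by (simp only: ac_simps)
    qed
    qed
  qed
qed



definition vx :: "nat \<Rightarrow> nat \<Rightarrow> nat" where "vx i l = prod_encode (i, l)"

lemma vx_eq[simp]: "vx i l = vx j l' \<longleftrightarrow> i = j \<and> l = l'"
  unfolding vx_def by simp

definition SV :: "nat \<Rightarrow> nat \<Rightarrow> nat set" where
  "SV k m = {vx i l | i l. i < k \<and> l \<le> m}"
definition SE :: "nat \<Rightarrow> nat \<Rightarrow> nat set set" where
  "SE k m = {{vx i 0, vx i l} | i l. i < k \<and> 1 \<le> l \<and> l \<le> m}"
definition SG :: "nat \<Rightarrow> nat \<Rightarrow> graph" where
  "SG k m = (SV k m, SE k m)"

lemma SG_verts[simp]: "verts (SG k m) = SV k m" and SG_edges[simp]: "edges (SG k m) = SE k m"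
  unfolding SG_def verts_def edges_def by auto

lemma SV_eq: "SV k m = (\<lambda>(i,l). vx i l) ` ({..<k} \<times> {..m})"
  unfolding SV_def by auto
lemma SE_eq: "SE k m = (\<lambda>(i,l). {vx i 0, vx i l}) ` ({..<k} \<times> {1..m})"
  unfolding SE_def by fastforce

lemma SG_wf: "wf_graph (SG k m)"
proof -
  have "finite (SV k m)" by (simp add: SV_eq)
  moreover have "\<exists>u v. e = {u, v} \<and> u \<noteq> v \<and> u \<in> SV k m \<and> v \<in> SV k m" if eS: "e \<in> SE k m" for e
  proof -
    obtain i l where e: "e = {vx i 0, vx i l}" "i < k" "1 \<le> l" "l \<le> m" using eS unfolding SE_def by blast
    show ?thesis by (rule exI[of _ "vx i 0"], rule exI[of _ "vx i l"]) (use e in \<open>auto simp: SV_def\<close>)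
  qed
  ultimately show ?thesis unfolding wf_graph_def by simp
qed

lemma SG_size: "graph_size (SG k m) \<le> k * (2 * m + 1)"
proof -
  have "card (SV k m) \<le> card ({..<k} \<times> {..m})" unfolding SV_eq by (rule card_image_le) simp
  also have "\<dots> = k * (m + 1)" by (simp add: card_cartesian_product)
  finally have "card (SV k m) \<le> k * (m + 1)" .
  moreover have "card (SE k m) \<le> card ({..<k} \<times> {1..m})" unfolding SE_eq by (rule card_image_le) simp
  moreover have "card ({..<k} \<times> {1..m}) = k * m" by (simp add: card_cartesian_product)
  ultimately show ?thesis unfolding graph_size_def SG_verts SG_edges by (simp add: algebra_simps)
qed

lemma edge_iff: "{u, w} \<in> SE k m \<longleftrightarrow> (\<exists>i l. i < k \<and> 1 \<le> l \<and> l \<le> m \<and>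
   ((u = vx i 0 \<and> w = vx i l) \<or> (u = vx i l \<and> w = vx i 0)))"
  unfolding SE_def by (auto simp: doubleton_eq_iff)

lemma nbrs_center: "i < k \<Longrightarrow> nbrs (SG k m) (vx i 0) = {vx i l | l. 1 \<le> l \<and> l \<le> m}"
  unfolding nbrs_def SG_edges edge_iff by auto

lemma nbrs_leaf: "i < k \<Longrightarrow> 1 \<le> l \<Longrightarrow> l \<le> m \<Longrightarrow> nbrs (SG k m) (vx i l) = {vx i 0}"
  unfolding nbrs_def SG_edges edge_iff by auto

lemma SG_vc: "vc (SG k m) \<le> k"
proof -
  let ?C = "(\<lambda>i. vx i 0) ` {..<k}"
  have "vertex_cover (SG k m) ?C" unfolding vertex_cover_def by (auto simp: SV_def SE_def)
  moreover have "finite {card C | C. vertex_cover (SG k m) C}"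
  proof -
    have "{card C | C. vertex_cover (SG k m) C} \<subseteq> card ` Pow (SV k m)"
      unfolding vertex_cover_def by auto
    moreover have "finite (SV k m)" by (simp add: SV_eq)
    ultimately show ?thesis by (meson finite_Pow_iff finite_imageI rev_finite_subset)
  qed
  ultimately have "vc (SG k m) \<le> card ?C" unfolding vc_def by (intro Min_le) auto
  also have "\<dots> \<le> k" using card_image_le[of "{..<k}"] by simp
  finally show ?thesis .
qed



lemma SG_nd: assumes "1 \<le> m" shows "nd (SG k m) \<le> 2 * k"
proof -
  define X where "X i = {vx i l | l. 1 \<le> l \<and> l \<le> m}" for i
  define P where "P = (\<lambda>i. {vx i 0}) ` {..<k} \<union> X ` {..<k}"
  have ne: "\<forall>Y\<in>P. Y \<noteq> {}" unfolding P_def X_def using assms by auto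
  have dis: "\<forall>Y\<in>P. \<forall>Z\<in>P. Y \<noteq> Z \<longrightarrow> Y \<inter> Z = {}" unfolding P_def X_def by auto
  have un: "\<Union>P = verts (SG k m)" unfolding P_def X_def SG_verts SV_def by (auto simp: le_Suc_eq not_less_eq_eq) 
  have ci: "\<forall>Y\<in>P. (is_clique (SG k m) Y \<or> is_indep (SG k m) Y) \<and>
             (\<forall>u\<in>Y. \<forall>v\<in>Y. nbrs (SG k m) u - Y = nbrs (SG k m) v - Y)"
  proof
    fix Y assume "Y \<in> P"
    then consider i where "i < k" "Y = {vx i 0}" | i where "i < k" "Y = X i" unfolding P_def by blast
    then show "(is_clique (SG k m) Y \<or> is_indep (SG k m) Y) \<and>
             (\<forall>u\<in>Y. \<forall>v\<in>Y. nbrs (SG k m) u - Y = nbrs (SG k m) v - Y)"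
    proof cases
      case 1 then show ?thesis unfolding is_clique_def by auto
    next
      case 2
      have "is_indep (SG k m) Y" unfolding is_indep_def SG_edges edge_iff 2 X_def by auto
      moreover have "\<forall>u\<in>Y. \<forall>v\<in>Y. nbrs (SG k m) u - Y = nbrs (SG k m) v - Y"
        unfolding 2 X_def using nbrs_leaf[OF 2(1)] by auto
      ultimately show ?thesis by blast
    qed
  qed
  have ndp: "nd_partition (SG k m) P" unfolding nd_partition_def using ne dis un ci by blast
  have fin: "finite {card P | P. nd_partition (SG k m) P}"
  proof -
    have "{card P | P. nd_partition (SG k m) P} \<subseteq> card ` Pow (Pow (SV k m))"
    proof
      fix n assume "n \<in> {card P | P. nd_partition (SG k m) P}"
      then obtain Q where Q: "n = card Q" "nd_partition (SG k m) Q" by blast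
      have "\<Union>Q = SV k m" using Q(2) unfolding nd_partition_def SG_verts by blast
      hence "Q \<in> Pow (Pow (SV k m))" by blast
      thus "n \<in> card ` Pow (Pow (SV k m))" using Q(1) by blast
    qed
    moreover have "finite (SV k m)" by (simp add: SV_eq)
    ultimately show ?thesis by (meson finite_Pow_iff finite_imageI rev_finite_subset)
  qed
  have "nd (SG k m) \<le> card P" unfolding nd_def using fin ndp by (intro Min_le) auto
  also have "\<dots> \<le> card ((\<lambda>i. {vx i 0}) ` {..<k}) + card (X ` {..<k})" unfolding P_def by (rule card_Un_le)
  also have "\<dots> \<le> k + k" using card_image_le[of "{..<k}" "\<lambda>i. {vx i 0}"] card_image_le[of "{..<k}" X] by simp
  finally show ?thesis by simp
qed



lemma cross_A: "is_cut G A B \<Longrightarrow> {a, b} \<in> edge_cut G A B \<Longrightarrow> a \<in> A \<Longrightarrow> b \<in> B"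
proof -
  assume c: "is_cut G A B" and e: "{a, b} \<in> edge_cut G A B" and a: "a \<in> A"
  obtain a' b' where ab: "a' \<in> A" "b' \<in> B" "{a, b} = {a', b'}" using e unfolding edge_cut_def by blast
  have dj: "A \<inter> B = {}" using c unfolding is_cut_def by blast
  from ab(3) have "(a = a' \<and> b = b') \<or> (a = b' \<and> b = a')" by (simp add: doubleton_eq_iff)
  then show "b \<in> B" using ab a dj by blast
qed
lemma cross_B: "is_cut G A B \<Longrightarrow> {a, b} \<in> edge_cut G A B \<Longrightarrow> a \<in> B \<Longrightarrow> b \<in> A"
proof -
  assume c: "is_cut G A B" and e: "{a, b} \<in> edge_cut G A B" and a: "a \<in> B"
  obtain a' b' where ab: "a' \<in> A" "b' \<in> B" "{a, b} = {a', b'}" using e unfolding edge_cut_def by blast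
  have dj: "A \<inter> B = {}" using c unfolding is_cut_def by blast
  from ab(3) have "(a = a' \<and> b = b') \<or> (a = b' \<and> b = a')" by (simp add: doubleton_eq_iff)
  then show "b \<in> A" using ab a dj by blast
qed

definition SS :: "nat \<Rightarrow> (nat \<Rightarrow> nat) \<Rightarrow> nat \<Rightarrow> nat set" where
  "SS d g i = {1..<d} \<union> {g i}"
definition Bs :: "nat \<Rightarrow> nat \<Rightarrow> (nat \<Rightarrow> nat) \<Rightarrow> nat set" where
  "Bs d k g = {vx i l | i l. i < k \<and> l \<in> SS d g i}"
definition Fg :: "nat \<Rightarrow> nat \<Rightarrow> (nat \<Rightarrow> nat) \<Rightarrow> nat set set" where
  "Fg d k g = {{vx i 0, vx i l} | i l. i < k \<and> l \<in> SS d g i}"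

context
  fixes d k m :: nat and g :: "nat \<Rightarrow> nat"
  assumes d1: "1 \<le> d" and dm: "d \<le> m" and k1: "1 \<le> k"
    and gG: "g \<in> PiE {..<k} (\<lambda>_. {d..m})"
begin

lemma g_range: "i < k \<Longrightarrow> d \<le> g i \<and> g i \<le> m"
proof -
  assume "i < k"
  then have "g i \<in> {d..m}" using PiE_mem[OF gG] by simp
  then show ?thesis by simp
qed

lemma SS_range: "i < k \<Longrightarrow> l \<in> SS d g i \<Longrightarrow> 1 \<le> l \<and> l \<le> m"
  using g_range[of i] d1 dm unfolding SS_def by auto

lemma card_SS: "i < k \<Longrightarrow> card (SS d g i) = d"
proof -
  assume i: "i < k"
  have "g i \<notin> {1..<d}" using g_range[OF i] by auto
  then have "card (SS d g i) = card {1..<d} + 1" unfolding SS_def by simp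
  then show ?thesis using d1 by simp
qed

lemma center_notin: "vx j 0 \<notin> Bs d k g"
proof
  assume "vx j 0 \<in> Bs d k g"
  then obtain i l where "vx j 0 = vx i l" "i < k" "l \<in> SS d g i" unfolding Bs_def by blast
  then show False using SS_range[of i l] by simp
qed

lemma BsV: "Bs d k g \<subseteq> SV k m"
proof
  fix x assume "x \<in> Bs d k g"
  then obtain i l where "x = vx i l" "i < k" "l \<in> SS d g i" unfolding Bs_def by blast
  then show "x \<in> SV k m" using SS_range[of i l] unfolding SV_def by blast
qed

lemma is_dcut_g: "is_dcut d (SG k m) (SV k m - Bs d k g) (Bs d k g)"
proof -
  have A0: "vx 0 0 \<in> SV k m - Bs d k g" using k1 center_notin unfolding SV_def by auto
  have B0: "vx 0 (g 0) \<in> Bs d k g" using k1 unfolding Bs_def SS_def by auto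
  have cut: "is_cut (SG k m) (SV k m - Bs d k g) (Bs d k g)"
    unfolding is_cut_def using A0 B0 BsV by auto
  have degA: "card (nbrs (SG k m) a \<inter> Bs d k g) \<le> d" if a: "a \<in> SV k m - Bs d k g" for a
  proof -
    obtain i l where il: "a = vx i l" "i < k" "l \<le> m" using a unfolding SV_def by auto
    show ?thesis
    proof (cases "l = 0")
      case True
      have "nbrs (SG k m) a \<inter> Bs d k g \<subseteq> (\<lambda>l. vx i l) ` SS d g i"
        unfolding il True Bs_def nbrs_center[OF il(2)] by auto
      hence "card (nbrs (SG k m) a \<inter> Bs d k g) \<le> card ((\<lambda>l. vx i l) ` SS d g i)"
        by (rule card_mono[rotated]) (simp add: SS_def)
      also have "\<dots> \<le> card (SS d g i)" by (rule card_image_le) (simp add: SS_def)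
      finally show ?thesis using card_SS[OF il(2)] by simp
    next
      case False
      have "nbrs (SG k m) a = {vx i 0}" using nbrs_leaf[of i k l m] il False by simp
      moreover have "vx i 0 \<notin> Bs d k g" by (rule center_notin)
      ultimately show ?thesis by simp
    qed
  qed
  have degB: "card (nbrs (SG k m) b \<inter> (SV k m - Bs d k g)) \<le> d" if b: "b \<in> Bs d k g" for b
  proof -
    obtain i l where il: "b = vx i l" "i < k" "l \<in> SS d g i" using b unfolding Bs_def by auto
    have "nbrs (SG k m) b = {vx i 0}" using nbrs_leaf[of i k l m] il SS_range by simp
    hence "card (nbrs (SG k m) b \<inter> (SV k m - Bs d k g)) \<le> card {vx i 0}"
      by (intro card_mono) auto
    then show ?thesis using d1 by simp
  qed
  show ?thesis unfolding is_dcut_def using cut degA degB by blast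
qed

lemma edge_cut_g: "edge_cut (SG k m) (SV k m - Bs d k g) (Bs d k g) = Fg d k g"
proof
  show "edge_cut (SG k m) (SV k m - Bs d k g) (Bs d k g) \<subseteq> Fg d k g"
  proof
    fix e assume e: "e \<in> edge_cut (SG k m) (SV k m - Bs d k g) (Bs d k g)"
    then obtain a b where ab: "e = {a, b}" "a \<in> SV k m - Bs d k g" "b \<in> Bs d k g" "e \<in> SE k m"
      unfolding edge_cut_def by auto
    obtain i l where il: "e = {vx i 0, vx i l}" "i < k" "1 \<le> l" "l \<le> m" using ab(4) unfolding SE_def by blast
    have c: "vx i 0 \<notin> Bs d k g" by (rule center_notin)
    have "b = vx i l" using ab il c by (auto simp: doubleton_eq_iff)
    hence "l \<in> SS d g i" using ab(3) il unfolding Bs_def by auto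
    thus "e \<in> Fg d k g" unfolding Fg_def using il by auto
  qed
next
  show "Fg d k g \<subseteq> edge_cut (SG k m) (SV k m - Bs d k g) (Bs d k g)"
  proof
    fix e assume "e \<in> Fg d k g"
    then obtain i l where il: "e = {vx i 0, vx i l}" "i < k" "l \<in> SS d g i" unfolding Fg_def by blast
    have r: "1 \<le> l" "l \<le> m" using SS_range il by auto
    have c: "vx i 0 \<notin> Bs d k g" by (rule center_notin)
    have "vx i 0 \<in> SV k m" unfolding SV_def using il by auto
    moreover have "vx i l \<in> Bs d k g" unfolding Bs_def using il by auto
    moreover have "e \<in> SE k m" unfolding SE_def using il r by auto
    ultimately show "e \<in> edge_cut (SG k m) (SV k m - Bs d k g) (Bs d k g)"
      unfolding edge_cut_def SG_edges using il c by blast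
  qed
qed

lemma Fg_dcut: "Fg d k g \<in> dcuts d (SG k m)"
  unfolding dcuts_def using is_dcut_g edge_cut_g by blast

lemma Fg_max: "Fg d k g \<in> max_dcuts d (SG k m)"
proof -
  have "\<not> Fg d k g \<subset> F'" if F': "F' \<in> dcuts d (SG k m)" for F'
  proof
    assume sub: "Fg d k g \<subset> F'"
    obtain A B where AB: "F' = edge_cut (SG k m) A B" "is_dcut d (SG k m) A B" using F' unfolding dcuts_def by blast
    have cut: "is_cut (SG k m) A B" using AB unfolding is_dcut_def by blast
    obtain e where e: "e \<in> F'" "e \<notin> Fg d k g" using sub by blast
    have "e \<in> SE k m" using e AB unfolding edge_cut_def by auto
    then obtain i l where il: "e = {vx i 0, vx i l}" "i < k" "1 \<le> l" "l \<le> m" unfolding SE_def by blast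
    have lS: "l \<notin> SS d g i" using e il unfolding Fg_def by blast
    define T where "T = (\<lambda>l. vx i l) ` insert l (SS d g i)"
    have cT: "card T = d + 1" unfolding T_def using card_SS[OF il(2)] lS
      by (subst card_image) (auto simp: inj_on_def SS_def)
    have inF: "{vx i 0, x} \<in> F'" if xT: "x \<in> T" for x
    proof -
      obtain l' where l': "x = vx i l'" "l' \<in> insert l (SS d g i)" using xT unfolding T_def by blast
      show ?thesis
      proof (cases "l' = l")
        case True then show ?thesis using l' e il by simp
      next
        case False
        then have "l' \<in> SS d g i" using l' by simp
        then have "{vx i 0, x} \<in> Fg d k g" unfolding Fg_def using l' il by blast
        then show ?thesis using sub by blast
      qed
    qed
    have Tn: "T \<subseteq> nbrs (SG k m) (vx i 0)"
      unfolding T_def nbrs_center[OF il(2)] using il SS_range[OF il(2)] by auto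
    have finN: "finite (nbrs (SG k m) (vx i 0))" unfolding nbrs_center[OF il(2)] by simp
    have "vx i 0 \<in> SV k m" unfolding SV_def using il by blast
    then have "vx i 0 \<in> A \<union> B" using cut unfolding is_cut_def SG_verts by blast
    then show False
    proof
      assume a: "vx i 0 \<in> A"
      have "T \<subseteq> nbrs (SG k m) (vx i 0) \<inter> B" using Tn inF cross_A[OF cut _ a] AB(1) by blast
      hence "card T \<le> card (nbrs (SG k m) (vx i 0) \<inter> B)" using finN by (intro card_mono) auto
      moreover have "card (nbrs (SG k m) (vx i 0) \<inter> B) \<le> d" using AB(2) a unfolding is_dcut_def by blast
      ultimately show False using cT by simp
    next
      assume a: "vx i 0 \<in> B"
      have "T \<subseteq> nbrs (SG k m) (vx i 0) \<inter> A" using Tn inF cross_B[OF cut _ a] AB(1) by blast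
      hence "card T \<le> card (nbrs (SG k m) (vx i 0) \<inter> A)" using finN by (intro card_mono) auto
      moreover have "card (nbrs (SG k m) (vx i 0) \<inter> A) \<le> d" using AB(2) a unfolding is_dcut_def by blast
      ultimately show False using cT by simp
    qed
  qed
  then show ?thesis unfolding max_dcuts_def using Fg_dcut by blast
qed

end



lemma dcuts_sub: "dcuts d x \<subseteq> Pow (edges x)"
  unfolding dcuts_def edge_cut_def by auto
lemma max_dcuts_sub: "max_dcuts d x \<subseteq> dcuts d x"
  unfolding max_dcuts_def by auto

lemma count_max:
  assumes d1: "1 \<le> d" and dm: "d \<le> m" and k1: "1 \<le> k"
  shows "(m + 1 - d) ^ k \<le> card (max_dcuts d (SG k m))"
proof -
  define G where "G = PiE {..<k} (\<lambda>_. {d..m})"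
  have cG: "card G = (m + 1 - d) ^ k" unfolding G_def by (simp add: card_PiE)
  have inj: "inj_on (Fg d k) G"
  proof (rule inj_onI)
    fix g g' assume g: "g \<in> G" and g': "g' \<in> G" and eq: "Fg d k g = Fg d k g'"
    show "g = g'"
    proof (rule PiE_ext[OF g[unfolded G_def] g'[unfolded G_def]])
      fix i assume "i \<in> {..<k}"
      hence i: "i < k" by simp
      have gi: "d \<le> g i" "g i \<le> m" using PiE_mem[OF g[unfolded G_def], of i] i by auto
      have "{vx i 0, vx i (g i)} \<in> Fg d k g" unfolding Fg_def SS_def using i by blast
      hence "{vx i 0, vx i (g i)} \<in> Fg d k g'" using eq by simp
      then obtain i' l' where il: "{vx i 0, vx i (g i)} = {vx i' 0, vx i' l'}" "i' < k" "l' \<in> SS d g' i'"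
        unfolding Fg_def by blast
      have g'i': "d \<le> g' i'" using PiE_mem[OF g'[unfolded G_def], of i'] il(2) by auto
      have "l' \<noteq> 0" using il(3) g'i' d1 unfolding SS_def by auto
      moreover have "g i \<noteq> 0" using gi d1 by simp
      moreover have "(vx i 0 = vx i' 0 \<and> vx i (g i) = vx i' l') \<or> (vx i 0 = vx i' l' \<and> vx i (g i) = vx i' 0)"
        using il(1) by (simp add: doubleton_eq_iff)
      ultimately have "l' = g i" by auto
      hence "g i \<in> SS d g' i'" using il(3) by simp
      moreover have "i' = i" using \<open>l' \<noteq> 0\<close> \<open>g i \<noteq> 0\<close> il(1) by (auto simp: doubleton_eq_iff)
      ultimately have "g i \<in> SS d g' i" by simp
      thus "g i = g' i" using gi unfolding SS_def by auto
    qed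
  qed
  have sub: "Fg d k ` G \<subseteq> max_dcuts d (SG k m)"
    using Fg_max[OF d1 dm k1] unfolding G_def by blast
  have fin: "finite (max_dcuts d (SG k m))"
    using max_dcuts_sub dcuts_sub wf_edges_finite[OF SG_wf]
    by (meson finite_Pow_iff rev_finite_subset)
  have "card (Fg d k ` G) \<le> card (max_dcuts d (SG k m))" using card_mono[OF fin sub] .
  thus ?thesis using card_image[OF inj] cG by simp
qed

lemma count_dcuts:
  assumes d1: "1 \<le> d" and dm: "d \<le> m" and k1: "1 \<le> k"
  shows "(m + 1 - d) ^ k \<le> card (dcuts d (SG k m))"
proof -
  have fin: "finite (dcuts d (SG k m))"
    using dcuts_sub wf_edges_finite[OF SG_wf] by (meson finite_Pow_iff rev_finite_subset)
  show ?thesis using count_max[OF assms] card_mono[OF fin max_dcuts_sub] by linarith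
qed

lemma no_kernel:
  assumes d1: "1 \<le> d"
    and sub: "\<And>x. wf_graph x \<Longrightarrow> Sol x \<subseteq> Pow (edges x)"
    and low: "\<And>k m. 1 \<le> k \<Longrightarrow> d \<le> m \<Longrightarrow> (m + 1 - d) ^ k \<le> card (Sol (SG k m))"
    and kap: "\<And>k m. d \<le> m \<Longrightarrow> kappa (SG k m) \<le> 2 * k"
  shows "\<not> fp_enum_kernel Sol kappa"
proof
  assume "fp_enum_kernel Sol kappa"
  from kernel_bound[OF this sub] obtain c where
    c: "\<forall>K0. \<exists>H. \<forall>x. wf_graph x \<longrightarrow> kappa x \<le> K0 \<longrightarrow> card (Sol x) \<le> H * (graph_size x + 1) ^ c"
    by blast
  define k where "k = c + 1"
  obtain H where H: "\<And>x. wf_graph x \<Longrightarrow> kappa x \<le> 2 * k \<Longrightarrow> card (Sol x) \<le> H * (graph_size x + 1) ^ c"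
    using c by blast
  define Q where "Q = 2 * k * (d + 1)"
  define t where "t = H * Q ^ c + 1"
  define m where "m = t + d - 1"
  have t1: "1 \<le> t" unfolding t_def by simp
  have dm: "d \<le> m" unfolding m_def using t1 by simp
  have mt: "m + 1 - d = t" unfolding m_def using t1 d1 by simp
  have "t ^ (c + 1) \<le> card (Sol (SG k m))" using low[OF _ dm, of k] mt unfolding k_def by simp
  also have "\<dots> \<le> H * (graph_size (SG k m) + 1) ^ c"
    using H[OF SG_wf kap[OF dm]] .
  also have "\<dots> \<le> H * (Q * t) ^ c"
  proof -
    have "graph_size (SG k m) + 1 \<le> k * (2 * m + 1) + 1" using SG_size[of k m] by simp
    also have "\<dots> \<le> k * (2 * m + 1) + k" using k_def by simp
    also have "\<dots> = k * (2 * (m + 1))" by (simp add: algebra_simps)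
    also have "\<dots> = 2 * k * (t + d)"
    proof -
      have "m + 1 = t + d" using mt dm by simp
      then show ?thesis by simp
    qed
    also have "\<dots> \<le> 2 * k * ((d + 1) * t)"
    proof -
      have "t + d \<le> (d + 1) * t" using t1 by (simp add: algebra_simps)
      thus ?thesis by simp
    qed
    also have "\<dots> = Q * t" unfolding Q_def by (simp add: algebra_simps)
    finally show ?thesis by (intro mult_le_mono2 power_mono) auto
  qed
  also have "\<dots> = (H * Q ^ c) * t ^ c" by (simp add: power_mult_distrib)
  also have "\<dots> < t * t ^ c" using t1 unfolding t_def by simp
  finally show False by simp
qed

theorem proposition18:
  fixes d :: nat
  assumes "d \<ge> 1"
  shows "\<not> fp_enum_kernel (dcuts d) vc \<and> \<not> fp_enum_kernel (max_dcuts d) vc \<and>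
         \<not> fp_enum_kernel (dcuts d) nd \<and> \<not> fp_enum_kernel (max_dcuts d) nd"
proof -
  have s1: "\<And>x. wf_graph x \<Longrightarrow> dcuts d x \<subseteq> Pow (edges x)" by (rule dcuts_sub)
  have s2: "\<And>x. wf_graph x \<Longrightarrow> max_dcuts d x \<subseteq> Pow (edges x)" using dcuts_sub max_dcuts_sub by blast
  have l1: "\<And>k m. 1 \<le> k \<Longrightarrow> d \<le> m \<Longrightarrow> (m + 1 - d) ^ k \<le> card (dcuts d (SG k m))"
    using count_dcuts assms by blast
  have l2: "\<And>k m. 1 \<le> k \<Longrightarrow> d \<le> m \<Longrightarrow> (m + 1 - d) ^ k \<le> card (max_dcuts d (SG k m))"
    using count_max assms by blast
  have kv: "vc (SG k m) \<le> 2 * k" if "d \<le> m" for k m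
    using SG_vc[of k m] by simp
  have kn: "nd (SG k m) \<le> 2 * k" if dm: "d \<le> m" for k m
  proof -
    have "1 \<le> m" using dm assms by simp
    then show ?thesis by (rule SG_nd)
  qed
  show ?thesis using no_kernel[OF assms s1 l1 kv] no_kernel[OF assms s2 l2 kv]
    no_kernel[OF assms s1 l1 kn] no_kernel[OF assms s2 l2 kn] by blast
qed

end
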